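(* For all $X,Y\in\mathbb{R}$ and all integers $p,q\geq1$, \begin{align*} \binom{p+q}{q}\mathcal{B}_{p}(X+Y)\mathcal{B}_{q}(Y) &=\sum_{j=0}^{p+q}\binom{p+q}{j}\binom{p+q-1-j}{q-1}\mathcal{B}_{p+q-j}(Y)\mathcal{B}_{j}(X)\\ &\quad+\sum_{h=0}^{q}\binom{p+q}{h}\binom{p+q-1-h}{p-1}(-1)^{h}\mathcal{B}_{p+q-h}(X+Y)\mathcal{B}_{h}(X). \end{align*}
   Context: $B_n(x)$ denotes the $n$th Bernoulli polynomial, defined by $\frac{te^{xt}}{e^t-1}=\sum_{n\ge0}B_n(x)\frac{t^n}{n!}$, and $\mathcal{B}_n(x)=B_n(x-[x])$ is the $n$th Bernoulli function, where $[x]$ is the largest integer $\le x$ (so $\mathcal{B}_0\equiv1$ and $\mathcal{B}_1(m)=-1/2$ for $m\in\mathbb{Z}$). Binomial coefficients with integer upper entry $n$ (possibly negative) and integer lower entry $k\ge0$ are $\binom{n}{k}=\frac{n(n-1)\cdots(n-k+1)}{k!}$; in particular $\binom{-1}{k}=(-1)^k$ and $\binom{n}{k}=0$ for $0\le n<k$. *)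

theory Defs
  imports "HOL-Analysis.Analysis" "HOL-Computational_Algebra.Formal_Power_Series"
begin

definition bernpoly :: "nat \<Rightarrow> real \<Rightarrow> real" where
  "bernpoly n x = fact n * fps_nth (fps_X * fps_exp x / (fps_exp 1 - 1)) n"

definition bernfun :: "nat \<Rightarrow> real \<Rightarrow> real" where
  "bernfun n x = bernpoly n (x - of_int \<lfloor>x\<rfloor>)"

definition ibinom :: "int \<Rightarrow> nat \<Rightarrow> real" where
  "ibinom n k = (of_int n :: real) gchoose k"

end

theory Submission
  imports Defs
begin


definition sc :: "real \<Rightarrow> real fps \<Rightarrow> real fps" where
  "sc w f = Abs_fps (\<lambda>n. w ^ n * fps_nth f n)"

lemma sc_nth[simp]: "fps_nth (sc w f) n = w ^ n * fps_nth f n"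
  by (simp add: sc_def)

lemma sc_mult: "sc w (f * g) = sc w f * sc w g"
proof (rule fps_ext)
  fix n
  have "fps_nth (sc w (f * g)) n = (\<Sum>i=0..n. w ^ i * fps_nth f i * (w ^ (n - i) * fps_nth g (n - i)))"
    by (simp add: fps_mult_nth sum_distrib_left, rule sum.cong, simp_all add: power_add[symmetric])
  then show "fps_nth (sc w (f * g)) n = fps_nth (sc w f * sc w g) n" by (simp add: fps_mult_nth mult.assoc)
qed

lemma sc_diff: "sc w (f - g) = sc w f - sc w g"
  by (rule fps_ext) (simp add: algebra_simps)

lemma sc_one: "sc w 1 = 1"
  by (rule fps_ext) simp

lemma sc_X: "sc w fps_X = fps_const w * fps_X"
  by (rule fps_ext) (simp add: fps_X_def)

lemma sc_exp: "sc w (fps_exp a) = fps_exp (w * a)"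
  by (rule fps_ext) (simp add: power_mult_distrib)

definition Bf :: "real \<Rightarrow> real fps" where
  "Bf a = fps_X * fps_exp a / (fps_exp 1 - 1)"

lemma exp_m1_nz: "w \<noteq> 0 \<Longrightarrow> fps_exp (w::real) - 1 \<noteq> 0"
proof
  assume "w \<noteq> 0" "fps_exp w - 1 = 0"
  then have "fps_nth (fps_exp w - 1) 1 = 0" by simp
  with \<open>w \<noteq> 0\<close> show False by simp
qed

lemma Bf_eq: "(fps_exp 1 - 1) * Bf a = fps_X * fps_exp a"
proof -
  have nz: "fps_exp (1::real) - 1 \<noteq> 0" by (rule exp_m1_nz) simp
  have sd1: "subdegree (fps_exp (1::real) - 1) = 1"
    by (rule subdegreeI) auto
  have nz2: "fps_X * fps_exp a \<noteq> (0::real fps)" by simp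
  have sd2: "subdegree (fps_X * fps_exp (a::real)) = 1"
    by (rule subdegreeI) auto
  have "(fps_exp 1 - 1) dvd (fps_X * fps_exp a)"
    using fps_dvd_iff[OF nz nz2] sd1 sd2 by simp
  then show ?thesis unfolding Bf_def by simp
qed

definition BG :: "real \<Rightarrow> real \<Rightarrow> real fps" where
  "BG w a = sc w (Bf a)"

lemma BG_nth: "fps_nth (BG w a) m = w ^ m * bernpoly m a / fact m"
  by (simp add: BG_def bernpoly_def Bf_def)

lemma BG_eq: "(fps_exp w - 1) * BG w a = fps_const w * fps_X * fps_exp (w * a)"
proof -
  have "sc w ((fps_exp 1 - 1) * Bf a) = sc w (fps_X * fps_exp a)" by (simp add: Bf_eq)
  then show ?thesis by (simp add: sc_mult sc_diff sc_one sc_X sc_exp BG_def)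
qed


lemma e2: "fps_exp (p::real) * fps_exp q = fps_exp (p + q)"
  by (simp add: fps_exp_add_mult)

lemma e3: "fps_exp (p::real) * fps_exp q * fps_exp r = fps_exp (p + q + r)"
  by (simp add: fps_exp_add_mult)

lemma key_exp:
  fixes a c x z :: real
  assumes x: "x = a - c \<or> x = a - c + 1"
  shows "fps_exp a * fps_exp (z*c) * (fps_exp (1+z) - 1) =
     fps_exp x * (fps_exp z - 1) * fps_exp ((1+z)*c) + (fps_exp 1 - 1) * fps_exp (z - z*x) * fps_exp ((1+z)*a)"
proof -
  have L: "fps_exp a * fps_exp (z*c) * (fps_exp (1+z) - 1) = fps_exp (a + z*c + (1+z)) - fps_exp (a + z*c)"
    by (simp add: right_diff_distrib e3 e2)
  have R: "fps_exp x * (fps_exp z - 1) * fps_exp ((1+z)*c) + (fps_exp 1 - 1) * fps_exp (z - z*x) * fps_exp ((1+z)*a)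
     = fps_exp (x + z + (1+z)*c) - fps_exp (x + (1+z)*c) + fps_exp (1 + (z - z*x) + (1+z)*a) - fps_exp ((z - z*x) + (1+z)*a)"
    by (simp add: right_diff_distrib left_diff_distrib e3 e2)
  from x show ?thesis
  proof
    assume x: "x = a - c"
    have 1: "x + z + (1+z)*c = a + z*c + z" and 2: "x + (1+z)*c = a + z*c"
      and 3: "1 + (z - z*x) + (1+z)*a = a + z*c + (1+z)" and 4: "(z - z*x) + (1+z)*a = a + z*c + z"
      unfolding x by (simp_all add: algebra_simps)
    show ?thesis unfolding L R 1 2 3 4 by simp
  next
    assume x: "x = a - c + 1"
    have 1: "x + z + (1+z)*c = a + z*c + (1+z)" and 2: "x + (1+z)*c = a + z*c + 1"
      and 3: "1 + (z - z*x) + (1+z)*a = a + z*c + 1" and 4: "(z - z*x) + (1+z)*a = a + z*c"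
      unfolding x by (simp_all add: algebra_simps)
    show ?thesis unfolding L R 1 2 3 4 by simp
  qed
qed

lemma key:
  fixes a c x z :: real
  assumes z: "z > 0" and x: "x = a - c \<or> x = a - c + 1"
  shows "fps_const (1+z) * (BG 1 a * BG z c) = fps_const z * (BG 1 x * BG (1+z) c) + BG (-z) x * BG (1+z) a"
proof -
  define P where "P = (fps_exp 1 - 1) * (fps_exp z - 1) * (fps_exp (1+z) - (1::real fps))"
  have P: "P \<noteq> 0" unfolding P_def using z by (simp add: exp_m1_nz)
  have b1: "(fps_exp 1 - 1) * BG 1 y = fps_X * fps_exp y" for y
    using BG_eq[of 1 y] by simp
  have bz: "(fps_exp z - 1) * BG z y = fps_const z * fps_X * fps_exp (z*y)" for y
    using BG_eq[of z y] by simp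
  have bu: "(fps_exp (1+z) - 1) * BG (1+z) y = fps_const (1+z) * fps_X * fps_exp ((1+z)*y)" for y
    using BG_eq[of "1+z" y] by simp
  have bm: "(fps_exp z - 1) * BG (-z) x = fps_const z * fps_X * fps_exp (z - z*x)"
  proof -
    have h: "(fps_exp (-z) - 1) * BG (-z) x = fps_const (-z) * fps_X * fps_exp (-z*x)"
      using BG_eq[of "-z" x] by simp
    have ez: "fps_exp z - 1 = - fps_exp z * (fps_exp (-z) - (1::real fps))"
      by (simp add: algebra_simps e2)
    have "(fps_exp z - 1) * BG (-z) x = - fps_exp z * ((fps_exp (-z) - 1) * BG (-z) x)"
      unfolding ez by (simp add: ac_simps)
    also have "\<dots> = fps_const z * fps_X * (fps_exp z * fps_exp (-z*x))"
      unfolding h by (simp only: fps_const_neg[symmetric] mult_minus_left mult_minus_right minus_minus mult_ac)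
    also have "\<dots> = fps_const z * fps_X * fps_exp (z - z*x)"
      by (simp add: e2)
    finally show ?thesis .
  qed
  have "P * (fps_const (1+z) * (BG 1 a * BG z c)) =
     fps_const (1+z) * ((fps_exp 1 - 1) * BG 1 a) * ((fps_exp z - 1) * BG z c) * (fps_exp (1+z) - 1)"
    unfolding P_def by (simp add: ac_simps)
  also have "\<dots> = fps_const (1+z) * fps_const z * fps_X * fps_X * (fps_exp a * fps_exp (z*c) * (fps_exp (1+z) - 1))"
    unfolding b1 bz by (simp add: ac_simps)
  also have "\<dots> = fps_const (1+z) * fps_const z * fps_X * fps_X *
     (fps_exp x * (fps_exp z - 1) * fps_exp ((1+z)*c) + (fps_exp 1 - 1) * fps_exp (z - z*x) * fps_exp ((1+z)*a))"
    using key_exp[OF x] by simp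
  also have "\<dots> = fps_const z * ((fps_exp 1 - 1) * BG 1 x) * (fps_exp z - 1) * ((fps_exp (1+z) - 1) * BG (1+z) c)
      + (fps_exp 1 - 1) * ((fps_exp z - 1) * BG (-z) x) * ((fps_exp (1+z) - 1) * BG (1+z) a)"
    unfolding b1 bu bm by (simp only: distrib_left mult_ac)
  also have "\<dots> = P * (fps_const z * (BG 1 x * BG (1+z) c) + BG (-z) x * BG (1+z) a)"
    unfolding P_def by (simp only: distrib_left mult_ac)
  finally show ?thesis using P by simp
qed


lemma coeff_eq:
  fixes a c x z :: real
  assumes z: "z > 0" and x: "x = a - c \<or> x = a - c + 1"
  shows "(1+z) * (\<Sum>i\<le>n. bernpoly i a / fact i * (z^(n-i) * bernpoly (n-i) c / fact (n-i))) =
    z * (\<Sum>i\<le>n. bernpoly i x / fact i * ((1+z)^(n-i) * bernpoly (n-i) c / fact (n-i))) +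
    (\<Sum>i\<le>n. (-z)^i * bernpoly i x / fact i * ((1+z)^(n-i) * bernpoly (n-i) a / fact (n-i)))"
proof -
  have "fps_nth (fps_const (1+z) * (BG 1 a * BG z c)) n =
        fps_nth (fps_const z * (BG 1 x * BG (1+z) c) + BG (-z) x * BG (1+z) a) n"
    using key[OF z x] by simp
  then show ?thesis
    by (simp only: fps_mult_left_const_nth fps_add_nth) (simp add: fps_mult_nth BG_nth atLeast0AtMost)
qed

definition Gp :: "nat \<Rightarrow> real \<Rightarrow> real \<Rightarrow> real poly" where
  "Gp n a c = (\<Sum>i\<le>n. monom (bernpoly i a / fact i * (bernpoly (n-i) c / fact (n-i))) (n-i))"

definition Rp :: "nat \<Rightarrow> real \<Rightarrow> real \<Rightarrow> real \<Rightarrow> real poly" where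
  "Rp n a c x = (\<Sum>i\<le>n. smult (bernpoly i x / fact i * (bernpoly (n-i) c / fact (n-i))) (pCons 0 ([:1,1:]^(n-i))))
     + (\<Sum>i\<le>n. smult ((-1)^i * bernpoly i x / fact i * (bernpoly (n-i) a / fact (n-i))) (monom 1 i * [:1,1:]^(n-i)))"



lemma poly_zero_pos:
  fixes p :: "real poly"
  assumes "\<And>z. z > 0 \<Longrightarrow> poly p z = 0"
  shows "p = 0"
proof (rule ccontr)
  assume "p \<noteq> 0"
  then have "finite {z. poly p z = 0}" by (rule poly_roots_finite)
  moreover have "{0<..} \<subseteq> {z. poly p z = 0}" using assms by auto
  ultimately have "finite {0::real<..}" by (rule finite_subset[rotated])
  then show False using infinite_Ioi by blast
qed

lemma poly_eq:
  fixes a c x :: real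
  assumes x: "x = a - c \<or> x = a - c + 1"
  shows "[:1,1:] * Gp n a c = Rp n a c x"
proof -
  have "[:1,1:] * Gp n a c - Rp n a c x = 0"
  proof (rule poly_zero_pos)
    fix z :: real assume z: "z > 0"
    have "poly (Gp n a c) z = (\<Sum>i\<le>n. bernpoly i a / fact i * (z^(n-i) * bernpoly (n-i) c / fact (n-i)))"
      unfolding Gp_def poly_sum poly_monom by (rule sum.cong) auto
    then have 1: "poly ([:1,1:] * Gp n a c) z = (1+z) * (\<Sum>i\<le>n. bernpoly i a / fact i * (z^(n-i) * bernpoly (n-i) c / fact (n-i)))"
      by (simp add: distrib_right)
    have 2: "poly (Rp n a c x) z = z * (\<Sum>i\<le>n. bernpoly i x / fact i * ((1+z)^(n-i) * bernpoly (n-i) c / fact (n-i))) +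
    (\<Sum>i\<le>n. (-z)^i * bernpoly i x / fact i * ((1+z)^(n-i) * bernpoly (n-i) a / fact (n-i)))"
      unfolding Rp_def poly_add poly_sum poly_smult poly_mult poly_monom poly_pCons poly_power sum_distrib_left
      apply (intro arg_cong2[where f="(+)"] sum.cong refl)
      subgoal by simp
      subgoal by (simp add: power_minus[of z])
      done
    show "poly ([:1,1:] * Gp n a c - Rp n a c x) z = 0"
      unfolding poly_diff 1 2 using coeff_eq[OF z x, of n] by linarith
  qed
  then show ?thesis by simp
qed


lemma coeff_lin: "coeff ([:1,1:]^m :: real poly) k = real (m choose k)"
proof (cases "k \<le> m")
  case True
  then show ?thesis using coeff_linear_poly_power[OF True, of 1 1] by simp
next
  case False
  have "degree ([:1,1:]^m :: real poly) \<le> m"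
    using degree_power_le[of "[:1,1:] :: real poly" m] by simp
  then have "coeff ([:1,1:]^m :: real poly) k = 0" using False by (intro coeff_eq_0) simp
  then show ?thesis using False by simp
qed

lemma coeff_Gp:
  assumes "k \<le> n"
  shows "coeff (Gp n a c) k = bernpoly (n-k) a / fact (n-k) * (bernpoly k c / fact k)"
proof -
  have "coeff (Gp n a c) k = (\<Sum>i\<le>n. if i = n - k then bernpoly i a / fact i * (bernpoly (n-i) c / fact (n-i)) else 0)"
    unfolding Gp_def coeff_sum coeff_monom using assms by (intro sum.cong) auto
  also have "\<dots> = bernpoly (n-k) a / fact (n-k) * (bernpoly (n-(n-k)) c / fact (n-(n-k)))"
    by (subst sum.delta) auto
  finally show ?thesis using assms by simp
qed

lemma coeff_Rp:
  "coeff (Rp n a c x) k =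
     (\<Sum>i\<le>n. (bernpoly i x / fact i * (bernpoly (n-i) c / fact (n-i))) * (if 1 \<le> k then real ((n-i) choose (k-1)) else 0))
   + (\<Sum>i\<le>n. ((-1)^i * bernpoly i x / fact i * (bernpoly (n-i) a / fact (n-i))) * (if i \<le> k then real ((n-i) choose (k-i)) else 0))"
  unfolding Rp_def coeff_add coeff_sum coeff_smult coeff_pCons' coeff_monom_mult coeff_lin
  by (intro arg_cong2[where f="(+)"] sum.cong refl) auto

lemma coeff_lin_mult: "coeff ([:1,1:] * (p::real poly)) k = coeff p k + (if k = 0 then 0 else coeff p (k - 1))"
  by (simp add: coeff_pCons')

lemma alt_rec:
  fixes g r :: "nat \<Rightarrow> real"
  assumes "g 0 = r 0" "\<And>k. g (Suc k) + g k = r (Suc k)"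
  shows "g q = (\<Sum>k\<le>q. (-1)^(q-k) * r k)"
proof (induction q)
  case 0
  then show ?case using assms by simp
next
  case (Suc q)
  have "(\<Sum>k\<le>Suc q. (-1)^(Suc q-k) * r k) = r (Suc q) + (\<Sum>k\<le>q. (-1)^(Suc q-k) * r k)"
    by simp
  also have "(\<Sum>k\<le>q. (-1)^(Suc q-k) * r k) = - (\<Sum>k\<le>q. (-1)^(q-k) * r k)"
    by (simp add: sum_negf[symmetric] Suc_diff_le)
  finally show ?case using assms(2)[of q] Suc by simp
qed

lemma alt_binom:
  assumes "h \<le> q"
  shows "(\<Sum>k\<le>q. (-1)^(q-k) * (if h \<le> k then real (m choose (k-h)) else 0)) = (real m - 1) gchoose (q-h)"
  using assms
proof (induction q)
  case 0
  then show ?case by simp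
next
  case (Suc q)
  show ?case
  proof (cases "h = Suc q")
    case True
    have "(\<Sum>k\<le>q. (-1)^(Suc q-k) * (if h \<le> k then real (m choose (k-h)) else 0)) = 0"
      using True by (intro sum.neutral) auto
    then show ?thesis using True by simp
  next
    case False
    then have hq: "h \<le> q" using Suc.prems by simp
    have "(\<Sum>k\<le>q. (-1)^(Suc q-k) * (if h \<le> k then real (m choose (k-h)) else 0))
        = - (\<Sum>k\<le>q. (-1)^(q-k) * (if h \<le> k then real (m choose (k-h)) else 0))"
      by (simp add: sum_negf[symmetric] Suc_diff_le)
    also have "\<dots> = - ((real m - 1) gchoose (q-h))" using Suc.IH[OF hq] by simp
    finally have 1: "(\<Sum>k\<le>q. (-1)^(Suc q-k) * (if h \<le> k then real (m choose (k-h)) else 0)) = - ((real m - 1) gchoose (q-h))" .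
    have 2: "real (m choose (Suc q - h)) = ((real m - 1) gchoose (q-h)) + ((real m - 1) gchoose Suc (q-h))"
      using gbinomial_Suc_Suc[of "real m - 1" "q-h"] hq by (simp add: binomial_gbinomial Suc_diff_le)
    show ?thesis using 1 2 hq by (simp add: Suc_diff_le)
  qed
qed


lemma swap_lemma:
  fixes f :: "nat \<Rightarrow> real"
  shows "(\<Sum>k\<in>A. f k * (\<Sum>i\<in>B. w i * C i k)) = (\<Sum>i\<in>B. w i * (\<Sum>k\<in>A. f k * C i k))"
  unfolding sum_distrib_left by (subst sum.swap) (simp add: mult_ac)

lemma main_poly:
  fixes a c x :: real and p q :: nat
  assumes p: "p \<ge> 1" and q: "q \<ge> 1" and x: "x = a - c \<or> x = a - c + 1"
  shows "real ((p + q) choose q) * bernpoly p a * bernpoly q c =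
    (\<Sum>j = 0..p + q. real ((p + q) choose j) * ibinom (int p + int q - 1 - int j) (q - 1)
        * bernpoly (p + q - j) c * bernpoly j x)
  + (\<Sum>h = 0..q. real ((p + q) choose h) * ibinom (int p + int q - 1 - int h) (p - 1)
        * (-1) ^ h * bernpoly (p + q - h) a * bernpoly h x)"
proof -
  define n where "n = p + q"
  define w1 where "w1 i = bernpoly i x / fact i * (bernpoly (n-i) c / fact (n-i))" for i
  define w2 where "w2 i = (-1)^i * bernpoly i x / fact i * (bernpoly (n-i) a / fact (n-i))" for i
  define g where "g k = coeff (Gp n a c) k" for k
  define r where "r k = coeff (Rp n a c x) k" for k
  have rr: "r k = g k + (if k = 0 then 0 else g (k - 1))" for k
    unfolding r_def g_def poly_eq[OF x, of n, symmetric] coeff_lin_mult ..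
  have gq: "g q = (\<Sum>k\<le>q. (-1)^(q-k) * r k)"
    by (rule alt_rec) (simp_all add: rr)
  have rk: "r k = (\<Sum>i\<le>n. w1 i * (if 1 \<le> k then real ((n-i) choose (k-1)) else 0))
       + (\<Sum>i\<le>n. w2 i * (if i \<le> k then real ((n-i) choose (k-i)) else 0))" for k
    unfolding r_def w1_def w2_def by (rule coeff_Rp)
  have "g q = (\<Sum>i\<le>n. w1 i * (\<Sum>k\<le>q. (-1)^(q-k) * (if 1 \<le> k then real ((n-i) choose (k-1)) else 0)))
     + (\<Sum>i\<le>n. w2 i * (\<Sum>k\<le>q. (-1)^(q-k) * (if i \<le> k then real ((n-i) choose (k-i)) else 0)))"
    unfolding gq rk distrib_left sum.distrib by (rule arg_cong2[where f="(+)"]; rule swap_lemma)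
  also have "\<dots> = (\<Sum>i\<le>n. w1 i * ((real (n-i) - 1) gchoose (q-1)))
     + (\<Sum>i\<le>n. w2 i * (if i \<le> q then (real (n-i) - 1) gchoose (q-i) else 0))"
  proof (intro arg_cong2[where f="(+)"] sum.cong refl)
    fix i assume "i \<in> {..n}"
    show "w1 i * (\<Sum>k\<le>q. (-1)^(q-k) * (if 1 \<le> k then real ((n-i) choose (k-1)) else 0)) =
        w1 i * ((real (n-i) - 1) gchoose (q-1))"
      using alt_binom[of 1 q "n-i"] q by simp
    show "w2 i * (\<Sum>k\<le>q. (-1)^(q-k) * (if i \<le> k then real ((n-i) choose (k-i)) else 0)) =
        w2 i * (if i \<le> q then (real (n-i) - 1) gchoose (q-i) else 0)"
    proof (cases "i \<le> q")
      case True
      then show ?thesis using alt_binom[of i q "n-i"] by simp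
    next
      case False
      have "(\<Sum>k\<le>q. (-1)^(q-k) * (if i \<le> k then real ((n-i) choose (k-i)) else 0)) = 0"
        using False by (intro sum.neutral) auto
      then show ?thesis using False by simp
    qed
  qed
  finally have G0: "g q = (\<Sum>i\<le>n. w1 i * ((real (n-i) - 1) gchoose (q-1)))
     + (\<Sum>i\<le>n. w2 i * (if i \<le> q then (real (n-i) - 1) gchoose (q-i) else 0))" .
  have "(\<Sum>i\<le>n. w2 i * (if i \<le> q then (real (n-i) - 1) gchoose (q-i) else 0))
      = (\<Sum>i\<in>{..n}. if i \<in> {..q} then w2 i * ((real (n-i) - 1) gchoose (q-i)) else 0)"
    by (intro sum.cong) auto
  also have "\<dots> = (\<Sum>i\<in>{..n} \<inter> {..q}. w2 i * ((real (n-i) - 1) gchoose (q-i)))"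
    by (rule sum.inter_restrict[symmetric]) simp
  also have "{..n} \<inter> {..q} = {..q}" by (auto simp: n_def)
  finally have G: "g q = (\<Sum>i\<le>n. w1 i * ((real (n-i) - 1) gchoose (q-1)))
     + (\<Sum>i\<le>q. w2 i * ((real (n-i) - 1) gchoose (q-i)))" using G0 by simp
  have Gq: "g q = bernpoly p a / fact p * (bernpoly q c / fact q)"
    unfolding g_def using coeff_Gp[of q n a c] by (simp add: n_def)
  have L: "real ((p + q) choose q) * bernpoly p a * bernpoly q c = fact n * g q"
    unfolding Gq using binomial_fact[of q n, where 'a=real] by (simp add: n_def field_simps)
  have T1: "(\<Sum>j = 0..p + q. real ((p + q) choose j) * ibinom (int p + int q - 1 - int j) (q - 1)
        * bernpoly (p + q - j) c * bernpoly j x) = fact n * (\<Sum>i\<le>n. w1 i * ((real (n-i) - 1) gchoose (q-1)))"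
    unfolding sum_distrib_left n_def[symmetric] atLeast0AtMost
  proof (rule sum.cong[OF refl])
    fix j assume j: "j \<in> {..n}"
    have ib: "ibinom (int p + int q - 1 - int j) (q - 1) = (real (n-j) - 1) gchoose (q-1)"
    proof -
      have "real_of_int (int p + int q - 1 - int j) = real (n-j) - 1"
        using j by (simp add: n_def of_nat_diff)
      then show ?thesis unfolding ibinom_def by (rule arg_cong)
    qed
    show "real (n choose j) * ibinom (int p + int q - 1 - int j) (q - 1) * bernpoly (n - j) c * bernpoly j x =
        fact n * (w1 j * ((real (n-j) - 1) gchoose (q-1)))"
      unfolding ib w1_def using binomial_fact[of j n, where 'a=real] j by (simp add: field_simps)
  qed
  have T2: "(\<Sum>h = 0..q. real ((p + q) choose h) * ibinom (int p + int q - 1 - int h) (p - 1)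
        * (-1) ^ h * bernpoly (p + q - h) a * bernpoly h x) = fact n * (\<Sum>i\<le>q. w2 i * ((real (n-i) - 1) gchoose (q-i)))"
    unfolding sum_distrib_left n_def[symmetric] atLeast0AtMost
  proof (rule sum.cong[OF refl])
    fix h assume h: "h \<in> {..q}"
    have e1: "real_of_int (int p + int q - 1 - int h) = real (n - h - 1)"
      using h p by (simp add: n_def of_nat_diff)
    have e2: "real (n-h) - 1 = real (n - h - 1)"
      using h p by (simp add: n_def of_nat_diff)
    have e3: "real (n - h - 1) gchoose (p-1) = real (n - h - 1) gchoose (q-h)"
      using gbinomial_of_nat_symmetric[of "q-h" "n-h-1", where 'a=real] h p by (simp add: n_def)
    have ib: "ibinom (int p + int q - 1 - int h) (p - 1) = (real (n-h) - 1) gchoose (q-h)"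
      unfolding ibinom_def e1 e2 e3 ..
    show "real (n choose h) * ibinom (int p + int q - 1 - int h) (p - 1) * (-1) ^ h * bernpoly (n - h) a * bernpoly h x =
        fact n * (w2 h * ((real (n-h) - 1) gchoose (q-h)))"
      unfolding ib w2_def using binomial_fact[of h n, where 'a=real] h by (simp add: n_def field_simps)
  qed
  show ?thesis unfolding L T1 T2 G by (simp add: distrib_left)
qed


theorem theorem3:
  fixes X Y :: real and p q :: nat
  assumes "p \<ge> 1" and "q \<ge> 1"
  shows "real ((p + q) choose q) * bernfun p (X + Y) * bernfun q Y =
    (\<Sum>j = 0..p + q. real ((p + q) choose j) * ibinom (int p + int q - 1 - int j) (q - 1)
        * bernfun (p + q - j) Y * bernfun j X)
  + (\<Sum>h = 0..q. real ((p + q) choose h) * ibinom (int p + int q - 1 - int h) (p - 1)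
        * (-1) ^ h * bernfun (p + q - h) (X + Y) * bernfun h X)"
proof -
  have fl: "\<lfloor>X + Y\<rfloor> = \<lfloor>X\<rfloor> + \<lfloor>Y\<rfloor> \<or> \<lfloor>X + Y\<rfloor> = \<lfloor>X\<rfloor> + \<lfloor>Y\<rfloor> + 1"
    using floor_add[of X Y] by (auto split: if_splits)
  have x: "X - of_int \<lfloor>X\<rfloor> = (X + Y - of_int \<lfloor>X + Y\<rfloor>) - (Y - of_int \<lfloor>Y\<rfloor>) \<or>
           X - of_int \<lfloor>X\<rfloor> = (X + Y - of_int \<lfloor>X + Y\<rfloor>) - (Y - of_int \<lfloor>Y\<rfloor>) + 1"
    using fl by auto
  show ?thesis
    unfolding bernfun_def by (rule main_poly[OF assms x])
qed

end
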